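(* Let $\alpha\ge1$ and let $X$ be a random variable with $\|X\|_{2\rho}\le\alpha\|X\|_\rho$ for all $\rho\ge1$. Define $N\colon[0,\infty)\to[0,\infty]$ by $\mathbb{P}(|X|\ge t)=e^{-N(t)}$ and $N^{-1}(s)=\sup\{t\ge0\colon N(t)\le s\}$. Then for every $\rho\ge1$, \[ \|X\|_\rho\sim_\alpha N^{-1}\bigl(\rho\vee 2\ln(2\alpha)\bigr). \] More precisely, $\frac1e N^{-1}(\rho)\le\|X\|_\rho\le 2(4\ln(2\alpha))^{\log_2\alpha}N^{-1}(\rho)$ for all $\rho\ge 2\ln(2\alpha)$.
   Context: $\|X\|_\rho=(\mathbb{E}|X|^\rho)^{1/\rho}$; $a\vee b=\max\{a,b\}$. $\sim_\alpha$ means two-sided comparability with constants depending only on $\alpha$. *)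

theory Defs
  imports "HOL-Probability.Probability"
begin

text \<open>The L^rho norm  ||X||_rho = (E |X|^rho)^(1/rho)  of a real random variable
  (used only under the hypothesis that all moments of order >= 1 are finite).\<close>
definition lpnorm :: "'a measure \<Rightarrow> ('a \<Rightarrow> real) \<Rightarrow> real \<Rightarrow> real" where
  "lpnorm M X \<rho> = (\<integral>x. \<bar>X x\<bar> powr \<rho> \<partial>M) powr (1 / \<rho>)"

definition tailN :: "'a measure \<Rightarrow> ('a \<Rightarrow> real) \<Rightarrow> real \<Rightarrow> ereal" where
  "tailN M X t =
     (let p = measure M {x \<in> space M. \<bar>X x\<bar> \<ge> t}
      in if p = 0 then \<infinity> else ereal (- ln p))"

definition Ninv :: "'a measure \<Rightarrow> ('a \<Rightarrow> real) \<Rightarrow> real \<Rightarrow> real" where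
  "Ninv M X s = Sup {t. 0 \<le> t \<and> tailN M X t \<le> ereal s}"

definition moment_hyp :: "'a measure \<Rightarrow> ('a \<Rightarrow> real) \<Rightarrow> real \<Rightarrow> bool" where
  "moment_hyp M X \<alpha> \<longleftrightarrow> prob_space M \<and> X \<in> borel_measurable M \<and>
     (\<forall>\<rho>\<ge>1. integrable M (\<lambda>x. \<bar>X x\<bar> powr \<rho>)) \<and>
     (\<forall>\<rho>\<ge>1. lpnorm M X (2 * \<rho>) \<le> \<alpha> * lpnorm M X \<rho>)"

end

theory Submission
  imports Defs
begin

lemma young1:
  fixes y s :: real
  assumes "0 \<le> y" "0 < s" "s \<le> 1"
  shows "y powr s \<le> s * y + (1 - s)"
proof (cases "y = 0")
  case True then show ?thesis using assms by simp
next
  case False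
  then have "y powr s * 1 powr (1 - s) \<le> s * y + (1 - s) * 1"
    using assms by (intro Youngs_inequality_0) auto
  then show ?thesis by simp
qed

lemma lp_mono:
  fixes X :: "'a \<Rightarrow> real"
  assumes P: "prob_space M" and Xm: "X \<in> borel_measurable M"
    and iq: "integrable M (\<lambda>x. \<bar>X x\<bar> powr q)" and ip: "integrable M (\<lambda>x. \<bar>X x\<bar> powr p)"
    and p0: "0 < p" and pq: "p \<le> q"
  shows "lpnorm M X p \<le> lpnorm M X q"
proof -
  interpret prob_space M by fact
  note Xm[measurable]
  define K where "K = (\<integral>x. \<bar>X x\<bar> powr q \<partial>M)"
  have K0: "K \<ge> 0" unfolding K_def by (intro integral_nonneg_AE) auto
  have Ip0: "(\<integral>x. \<bar>X x\<bar> powr p \<partial>M) \<ge> 0" by (intro integral_nonneg_AE) auto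
  have key: "(\<integral>x. \<bar>X x\<bar> powr p \<partial>M) \<le> K powr (p/q)"
  proof (cases "K = 0")
    case True
    then have "AE x in M. \<bar>X x\<bar> powr q = 0"
      using integral_nonneg_eq_0_iff_AE[OF iq] unfolding K_def by auto
    then have "AE x in M. \<bar>X x\<bar> powr p = 0" by (auto elim!: AE_mp)
    then have "(\<integral>x. \<bar>X x\<bar> powr p \<partial>M) = (\<integral>x. 0 \<partial>M)" by (intro integral_cong_AE) auto
    then show ?thesis using True by simp
  next
    case False
    with K0 have Kp: "K > 0" by simp
    define s where "s = p / q"
    have s0: "0 < s" "s \<le> 1" using p0 pq by (auto simp: s_def)
    have pw: "\<bar>X x\<bar> powr p \<le> K powr s * (s * (\<bar>X x\<bar> powr q / K) + (1 - s))" for x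
    proof -
      have "\<bar>X x\<bar> powr p = K powr s * (\<bar>X x\<bar> powr q / K) powr s"
        using Kp p0 pq by (simp add: powr_divide powr_powr s_def)
      also have "\<dots> \<le> K powr s * (s * (\<bar>X x\<bar> powr q / K) + (1 - s))"
        using Kp s0 by (intro mult_left_mono young1) auto
      finally show ?thesis .
    qed
    have "(\<integral>x. \<bar>X x\<bar> powr p \<partial>M) \<le> (\<integral>x. K powr s * (s * (\<bar>X x\<bar> powr q / K) + (1 - s)) \<partial>M)"
      using pw iq ip by (intro integral_mono) auto
    also have "\<dots> = K powr s * (s * (K / K) + (1 - s))"
      using iq by (simp add: K_def prob_space)
    also have "\<dots> = K powr s" using Kp by simp
    finally show ?thesis by (simp add: s_def)
  qed
  have "lpnorm M X p \<le> (K powr (p/q)) powr (1/p)"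
    unfolding lpnorm_def using key Ip0 p0 by (intro powr_mono2) auto
  also have "\<dots> = lpnorm M X q" using p0 pq by (simp add: lpnorm_def K_def powr_powr)
  finally show ?thesis .
qed


lemma tailN_le:
  assumes N: "tailN M X t \<le> ereal \<rho>"
  shows  "measure M {x \<in> space M. t \<le> \<bar>X x\<bar>} \<noteq> 0 \<and> - ln (measure M {x \<in> space M. t \<le> \<bar>X x\<bar>}) \<le> \<rho>"
proof (cases "measure M {x \<in> space M. t \<le> \<bar>X x\<bar>} = 0")
  case True then show ?thesis using N by (simp add: tailN_def)
next
  case False then show ?thesis using N by (simp add: tailN_def)
qed
lemma tailN_ge:
  assumes "measure M {x \<in> space M. t \<le> \<bar>X x\<bar>} \<ge> exp (-\<rho>)"
  shows "tailN M X t \<le> ereal \<rho>"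
proof -
  let ?p = "measure M {x \<in> space M. t \<le> \<bar>X x\<bar>}"
  have "?p > 0" using assms by (meson exp_gt_zero less_le_trans)
  moreover have "- ln ?p \<le> \<rho>" using assms \<open>?p > 0\<close>
    by (metis exp_le_cancel_iff exp_ln minus_le_iff)
  ultimately show ?thesis by (simp add: tailN_def)
qed

lemma lp_double:
  assumes H: "moment_hyp M X \<alpha>" and r: "r \<ge> 1" and a0: "\<alpha> \<ge> 0"
  shows "lpnorm M X (2^k * r) \<le> \<alpha>^k * lpnorm M X r"
proof (induction k)
  case 0 then show ?case by simp
next
  case (Suc k)
  have "(1::real) \<le> 2^k" by simp
  then have "1 \<le> 2^k * r" using r mult_mono[of 1 "2^k" 1 r] by simp
  then have "lpnorm M X (2 * (2^k * r)) \<le> \<alpha> * lpnorm M X (2^k * r)"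
    using H unfolding moment_hyp_def by blast
  also have "\<dots> \<le> \<alpha> * (\<alpha>^k * lpnorm M X r)" using Suc a0 by (intro mult_left_mono) auto
  finally show ?case by (simp add: mult.assoc)
qed

lemma lower_pt:
  assumes H: "moment_hyp M X \<alpha>" and rho: "\<rho> \<ge> 1" and t: "0 \<le> t"
    and N: "tailN M X t \<le> ereal \<rho>"
  shows "t \<le> exp 1 * lpnorm M X \<rho>"
proof -
  interpret prob_space M using H by (simp add: moment_hyp_def)
  have Xm[measurable]: "X \<in> borel_measurable M" using H by (simp add: moment_hyp_def)
  have int: "integrable M (\<lambda>x. \<bar>X x\<bar> powr \<rho>)" using H rho by (simp add: moment_hyp_def)
  define S where "S = {x \<in> space M. t \<le> \<bar>X x\<bar>}"
  have Ss[measurable]: "S \<in> sets M" unfolding S_def by measurable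
  define p where "p = measure M S"
  have p0: "p \<noteq> 0" and lp: "- ln p \<le> \<rho>"
    using tailN_le[OF N] by (auto simp: p_def S_def)
  have pp: "p > 0" using p0 by (simp add: p_def order_less_le)
  have pe: "exp (-\<rho>) \<le> p" using lp pp by (metis exp_le_cancel_iff exp_ln minus_le_iff)
  show ?thesis
  proof (cases "t = 0")
    case True then show ?thesis by (simp add: lpnorm_def)
  next
    case False
    with t have tp: "t > 0" by simp
    have "(\<integral>x. t powr \<rho> * indicator S x \<partial>M) \<le> (\<integral>x. \<bar>X x\<bar> powr \<rho> \<partial>M)"
    proof (intro integral_mono int)
      show "integrable M (\<lambda>x. t powr \<rho> * indicator S x)"
        using Ss by (intro integrable_mult_right integrable_real_indicator) (auto simp: emeasure_eq_measure)
      fix x assume "x \<in> space M"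
      show "t powr \<rho> * indicator S x \<le> \<bar>X x\<bar> powr \<rho>"
        using t rho by (auto simp: S_def split: split_indicator intro: powr_mono2)
    qed
    then have I1: "t powr \<rho> * p \<le> (\<integral>x. \<bar>X x\<bar> powr \<rho> \<partial>M)"
      by (simp add: p_def)
    have "t powr \<rho> * exp (-\<rho>) \<le> t powr \<rho> * p" using pe by (intro mult_left_mono) auto
    with I1 have I2: "t powr \<rho> * exp (-\<rho>) \<le> (\<integral>x. \<bar>X x\<bar> powr \<rho> \<partial>M)" by linarith
    have "(t powr \<rho> * exp (-\<rho>)) powr (1/\<rho>) \<le> lpnorm M X \<rho>"
      unfolding lpnorm_def using I2 rho by (intro powr_mono2) auto
    moreover have "(t powr \<rho> * exp (-\<rho>)) powr (1/\<rho>) = t * exp (-1)"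
      using tp rho by (simp add: powr_mult powr_powr exp_powr_real)
    ultimately have "t * exp (-1) \<le> lpnorm M X \<rho>" by simp
    then show ?thesis by (simp add: exp_minus field_simps)
  qed
qed


lemma ln2_half: "ln (2::real) > 1/2"
  by (smt (verit, ccfv_SIG) ln_add1_gt)

definition TT where "TT M X s = {t. 0 \<le> t \<and> tailN M X t \<le> ereal s}"

lemma Ninv_facts:
  assumes H: "moment_hyp M X \<alpha>" and s: "s \<ge> 1"
  shows "0 \<le> Ninv M X s" "Ninv M X s \<le> exp 1 * lpnorm M X s"
    "\<And>t. 0 \<le> t \<Longrightarrow> tailN M X t \<le> ereal s \<Longrightarrow> t \<le> Ninv M X s"
proof -
  interpret prob_space M using H by (simp add: moment_hyp_def)
  have "{x \<in> space M. 0 \<le> \<bar>X x\<bar>} = space M" by auto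
  then have "measure M {x \<in> space M. 0 \<le> \<bar>X x\<bar>} = 1" by (simp add: prob_space)
  moreover have "exp (-s) \<le> 1" using s by simp
  ultimately have "tailN M X 0 \<le> ereal s" by (intro tailN_ge) simp
  then have z: "0 \<in> TT M X s" by (simp add: TT_def)
  have b: "\<And>t. t \<in> TT M X s \<Longrightarrow> t \<le> exp 1 * lpnorm M X s"
    using lower_pt[OF H s] by (auto simp: TT_def)
  have bdd: "bdd_above (TT M X s)" using b by (auto simp: bdd_above_def)
  have N: "Ninv M X s = Sup (TT M X s)" by (simp add: Ninv_def TT_def)
  show "0 \<le> Ninv M X s" unfolding N using z bdd by (rule cSup_upper)
  show "Ninv M X s \<le> exp 1 * lpnorm M X s" unfolding N using z b by (intro cSup_least) auto
  show "\<And>t. 0 \<le> t \<Longrightarrow> tailN M X t \<le> ereal s \<Longrightarrow> t \<le> Ninv M X s"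
    unfolding N using bdd by (intro cSup_upper) (auto simp: TT_def)
qed


lemma PZ:
  assumes H: "moment_hyp M X \<alpha>" and a1: "\<alpha> \<ge> 1" and r: "r \<ge> 1"
  shows "tailN M X (lpnorm M X r / 2) \<le> ereal (r * (2 * ln (2 * \<alpha>)))"
proof -
  interpret prob_space M using H by (simp add: moment_hyp_def)
  have Xm[measurable]: "X \<in> borel_measurable M" using H by (simp add: moment_hyp_def)
  have int1: "integrable M (\<lambda>x. \<bar>X x\<bar> powr r)" using H r by (simp add: moment_hyp_def)
  have int2: "integrable M (\<lambda>x. \<bar>X x\<bar> powr (2*r))" using H r by (simp add: moment_hyp_def)
  have hyp: "lpnorm M X (2 * r) \<le> \<alpha> * lpnorm M X r" using H r by (simp add: moment_hyp_def)
  define \<rho> where "\<rho> = r * (2 * ln (2 * \<alpha>))"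
  have lnp: "ln (2 * \<alpha>) > 0" using a1 by simp
  have rho0: "\<rho> \<ge> 0" using lnp r by (simp add: \<rho>_def)
  define E where "E = (\<integral>x. \<bar>X x\<bar> powr r \<partial>M)"
  have E0: "E \<ge> 0" unfolding E_def by (intro integral_nonneg_AE) auto
  define L where "L = lpnorm M X r"
  have LE: "L = E powr (1/r)" by (simp add: L_def lpnorm_def E_def)
  define S where "S = {x \<in> space M. L/2 \<le> \<bar>X x\<bar>}"
  have "measure M S \<ge> exp (-\<rho>)"
  proof (cases "E = 0")
    case True
    then have "L = 0" using LE by simp
    then have "S = space M" by (auto simp: S_def)
    then show ?thesis using rho0 by (simp add: prob_space)
  next
    case False
    with E0 have Ep: "E > 0" by simp
    have Lp: "L > 0" using Ep LE by simp
    have EL: "E = L powr r" using LE E0 r by (simp add: powr_powr)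
    define \<theta> where "\<theta> = 2 powr (-r)"
    have th0: "\<theta> > 0" by (simp add: \<theta>_def)
    have th2: "\<theta> \<le> 1/2"
    proof -
      have "\<theta> \<le> 2 powr (-1)" unfolding \<theta>_def using r by (intro powr_mono) auto
      then show ?thesis by (simp add: powr_minus)
    qed
    define A where "A = {x \<in> space M. L/2 < \<bar>X x\<bar>}"
    have As[measurable]: "A \<in> sets M" unfolding A_def by measurable
    have Ss[measurable]: "S \<in> sets M" unfolding S_def by measurable
    define q where "q = measure M A"
    have qS: "q \<le> measure M S" unfolding q_def
      by (intro finite_measure_mono) (auto simp: A_def S_def)
    define J where "J = (\<integral>x. \<bar>X x\<bar> powr r * indicator A x \<partial>M)"
    have intJ: "integrable M (\<lambda>x. \<bar>X x\<bar> powr r * indicator A x)"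
      using integrable_mult_indicator[OF As int1] by (simp add: mult.commute)
    have intA: "integrable M (indicator A :: 'a \<Rightarrow> real)"
      using As by (intro integrable_real_indicator) (auto simp: emeasure_eq_measure)
    have pw1: "\<bar>X x\<bar> powr r \<le> \<theta> * E + \<bar>X x\<bar> powr r * indicator A x" if "x \<in> space M" for x
    proof (cases "x \<in> A")
      case True then show ?thesis using th0 E0 by simp
    next
      case False
      then have "\<bar>X x\<bar> \<le> L/2" using that by (auto simp: A_def)
      then have "\<bar>X x\<bar> powr r \<le> (L/2) powr r" using r by (intro powr_mono2) auto
      also have "\<dots> = \<theta> * E" using Lp by (simp add: EL \<theta>_def powr_divide powr_minus_divide)
      finally show ?thesis using False by simp
    qed
    have "(\<integral>x. \<bar>X x\<bar> powr r \<partial>M) \<le> (\<integral>x. \<theta> * E + \<bar>X x\<bar> powr r * indicator A x \<partial>M)"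
      using pw1 int1 intJ by (intro integral_mono) auto
    then have "E \<le> (\<integral>x. \<theta> * E + \<bar>X x\<bar> powr r * indicator A x \<partial>M)"
      by (simp only: E_def[symmetric])
    also have "\<dots> = \<theta> * E + J" using intJ by (simp add: J_def prob_space)
    finally have EJ: "(1 - \<theta>) * E \<le> J" by (simp add: algebra_simps)
    define F where "F = (\<integral>x. \<bar>X x\<bar> powr (2*r) \<partial>M)"
    have F0: "F \<ge> 0" unfolding F_def by (intro integral_nonneg_AE) auto
    define G where "G = \<alpha> powr (2*r) * E^2"
    have Gp: "G > 0" using Ep a1 by (simp add: G_def)
    have FG: "F \<le> G"
    proof -
      have "F = (lpnorm M X (2*r)) powr (2*r)" using F0 r by (simp add: lpnorm_def F_def powr_powr)
      also have "\<dots> \<le> (\<alpha> * L) powr (2*r)"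
        using hyp r by (intro powr_mono2) (auto simp: L_def lpnorm_def)
      also have "\<dots> = \<alpha> powr (2*r) * (L powr r)^2"
      proof -
        have "L powr (2*r) = (L powr r)^2"
          using powr_add[of L r r] by (metis mult_2 power2_eq_square)
        then show ?thesis using a1 Lp by (simp add: powr_mult)
      qed
      finally show ?thesis by (simp add: G_def EL)
    qed
    define D where "D = (1 - \<theta>) * E"
    define lam where "lam = D / G"
    have D0: "D \<ge> 0" using th2 E0 by (simp add: D_def)
    have l0: "lam \<ge> 0" using D0 Gp by (simp add: lam_def)
    have pw2: "2 * lam * (\<bar>X x\<bar> powr r * indicator A x) \<le> lam^2 * \<bar>X x\<bar> powr (2*r) + indicator A x" for x
    proof (cases "x \<in> A")
      case True
      have sq: "\<bar>X x\<bar> powr (2*r) = \<bar>X x\<bar> powr r * \<bar>X x\<bar> powr r"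
        using powr_add[of "\<bar>X x\<bar>" r r] by (metis mult_2)
      have "0 \<le> (lam * \<bar>X x\<bar> powr r - 1)^2" by simp
      then have "2 * lam * \<bar>X x\<bar> powr r \<le> lam^2 * (\<bar>X x\<bar> powr r * \<bar>X x\<bar> powr r) + 1"
        by (simp add: power2_eq_square algebra_simps)
      then show ?thesis using True by (simp add: sq)
    next
      case False then show ?thesis by simp
    qed
    have "2 * lam * J = (\<integral>x. 2 * lam * (\<bar>X x\<bar> powr r * indicator A x) \<partial>M)"
      by (simp add: J_def)
    also have "\<dots> \<le> (\<integral>x. lam^2 * \<bar>X x\<bar> powr (2*r) + indicator A x \<partial>M)"
      using pw2 intJ int2 intA by (intro integral_mono) auto
    also have "\<dots> = lam^2 * F + q"
      using int2 intA by (simp add: F_def q_def)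
    finally have key: "2 * lam * J \<le> lam^2 * F + q" .
    have "2 * lam * D \<le> 2 * lam * J" using EJ l0 unfolding D_def by (intro mult_left_mono) auto
    moreover have "lam^2 * F \<le> lam^2 * G" using FG by (intro mult_left_mono) auto
    ultimately have "2 * lam * D - lam^2 * G \<le> q" using key by linarith
    moreover have "2 * lam * D - lam^2 * G = D^2 / G" using Gp by (simp add: lam_def field_simps power2_eq_square)
    ultimately have qD: "D^2 / G \<le> q" by simp
    have "D^2 / G = (1-\<theta>)^2 / \<alpha> powr (2*r)" using Ep by (simp add: D_def G_def power_mult_distrib)
    also have "\<dots> \<ge> \<theta>^2 / \<alpha> powr (2*r)"
      using th0 th2 a1 by (intro divide_right_mono power_mono) auto
    moreover have "\<theta>^2 / \<alpha> powr (2*r) = exp (-\<rho>)"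
    proof -
      have "\<theta>^2 = exp (-(2*r) * ln 2)" by (simp add: \<theta>_def powr_def power2_eq_square flip: exp_add)
      moreover have "\<alpha> powr (2*r) = exp ((2*r) * ln \<alpha>)" using a1 by (simp add: powr_def)
      moreover have "\<rho> = 2*r*ln 2 + 2*r*ln \<alpha>" using a1 by (simp add: \<rho>_def ln_mult algebra_simps)
      ultimately show ?thesis by (simp add: exp_diff [symmetric] algebra_simps)
    qed
    ultimately show ?thesis using qD qS by linarith
  qed
  then show ?thesis unfolding \<rho>_def S_def L_def by (rule tailN_ge)
qed


lemma rho0_gt1: "(\<alpha>::real) \<ge> 1 \<Longrightarrow> 2 * ln (2 * \<alpha>) > 1"
proof -
  assume a: "\<alpha> \<ge> 1"
  have "ln 2 \<le> ln (2 * \<alpha>)" using a by simp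
  then show ?thesis using ln2_half by linarith
qed

lemma kfacts:
  fixes \<alpha> :: real
  assumes a: "\<alpha> \<ge> 1"
  obtains k :: nat where "2 * ln (2 * \<alpha>) \<le> 2^k" "\<alpha>^k \<le> (4 * ln (2 * \<alpha>)) powr (log 2 \<alpha>)"
proof -
  define \<rho>0 where "\<rho>0 = 2 * ln (2 * \<alpha>)"
  have r1: "\<rho>0 > 1" using rho0_gt1[OF a] by (simp add: \<rho>0_def)
  define k where "k = nat \<lceil>log 2 \<rho>0\<rceil>"
  have lg: "log 2 \<rho>0 > 0" using r1 by simp
  have kr: "real k = of_int \<lceil>log 2 \<rho>0\<rceil>" using lg by (simp add: k_def)
  have k1: "log 2 \<rho>0 \<le> real k" using kr by simp
  have k2: "real k \<le> log 2 \<rho>0 + 1" using kr by linarith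
  have p2: "(2::real)^k = 2 powr (real k)" by (simp add: powr_realpow)
  have A: "\<rho>0 \<le> 2^k"
  proof -
    have "\<rho>0 = 2 powr (log 2 \<rho>0)" using r1 by simp
    also have "\<dots> \<le> 2 powr (real k)" using k1 by (intro powr_mono) auto
    finally show ?thesis using p2 by simp
  qed
  have B: "(2::real)^k \<le> 2 * \<rho>0"
  proof -
    have "(2::real)^k \<le> 2 powr (log 2 \<rho>0 + 1)" unfolding p2 using k2 by (intro powr_mono) auto
    also have "\<dots> = 2 * \<rho>0" using r1 by (simp add: powr_add)
    finally show ?thesis .
  qed
  have "\<alpha>^k = ((2::real)^k) powr (log 2 \<alpha>)"
  proof -
    have "((2::real)^k) powr (log 2 \<alpha>) = 2 powr (real k * log 2 \<alpha>)" unfolding p2 by (simp add: powr_powr)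
    also have "\<dots> = (2 powr (log 2 \<alpha>)) powr (real k)" by (simp add: powr_powr mult.commute)
    also have "\<dots> = \<alpha> powr (real k)" using a by simp
    also have "\<dots> = \<alpha>^k" using a by (simp add: powr_realpow)
    finally show ?thesis by simp
  qed
  also have "\<dots> \<le> (2 * \<rho>0) powr (log 2 \<alpha>)" using B a by (intro powr_mono2) auto
  finally have "\<alpha>^k \<le> (4 * ln (2 * \<alpha>)) powr (log 2 \<alpha>)" by (simp add: \<rho>0_def)
  with A show ?thesis using that by (simp add: \<rho>0_def)
qed

lemma upper:
  assumes H: "moment_hyp M X \<alpha>" and a: "\<alpha> \<ge> 1"
    and k1: "2 * ln (2 * \<alpha>) \<le> 2^k" and k2: "\<alpha>^k \<le> B"
    and rho: "\<rho> \<ge> 2 * ln (2 * \<alpha>)"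
  shows "lpnorm M X \<rho> \<le> 2 * B * Ninv M X \<rho>"
proof -
  define \<rho>0 where "\<rho>0 = 2 * ln (2 * \<alpha>)"
  have r1: "\<rho>0 > 1" using rho0_gt1[OF a] by (simp add: \<rho>0_def)
  define r where "r = \<rho> / \<rho>0"
  have r: "r \<ge> 1" using rho r1 by (simp add: r_def \<rho>0_def)
  have rr: "\<rho> = r * \<rho>0" using r1 by (simp add: r_def)
  have rho1: "\<rho> \<ge> 1" using rho r1 by (simp add: \<rho>0_def)
  have "\<rho> \<le> 2^k * r" unfolding rr using mult_right_mono[of \<rho>0 "2^k" r] k1 r by (simp add: \<rho>0_def mult.commute)
  moreover have "2^k * r \<ge> 1" using r by (metis calculation order_trans rho1)
  ultimately have "lpnorm M X \<rho> \<le> lpnorm M X (2^k * r)"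
    using H rho1 by (intro lp_mono) (auto simp: moment_hyp_def)
  also have "\<dots> \<le> \<alpha>^k * lpnorm M X r" using lp_double[OF H r] a by simp
  also have "\<dots> \<le> B * lpnorm M X r" using k2 by (intro mult_right_mono) (auto simp: lpnorm_def)
  also have "\<dots> \<le> B * (2 * Ninv M X \<rho>)"
  proof -
    have "tailN M X (lpnorm M X r / 2) \<le> ereal \<rho>" using PZ[OF H a r] by (simp add: rr \<rho>0_def)
    moreover have "0 \<le> lpnorm M X r / 2" by (simp add: lpnorm_def)
    ultimately have "lpnorm M X r / 2 \<le> Ninv M X \<rho>" using Ninv_facts(3)[OF H rho1] by blast
    moreover have "B \<ge> 0" using k2 a by (meson order_trans one_le_power zero_le_one)
    ultimately show ?thesis by (intro mult_left_mono) auto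
  qed
  finally show ?thesis by simp
qed


theorem mainTheorem5:
  fixes \<alpha> :: real
  assumes "\<alpha> \<ge> 1"
  shows "(\<exists>c>0. \<exists>C>0. \<forall>(M::'a measure) X. moment_hyp M X \<alpha> \<longrightarrow>
            (\<forall>\<rho>\<ge>1. c * Ninv M X (max \<rho> (2 * ln (2 * \<alpha>))) \<le> lpnorm M X \<rho> \<and>
                     lpnorm M X \<rho> \<le> C * Ninv M X (max \<rho> (2 * ln (2 * \<alpha>)))))
       \<and> (\<forall>(M::'a measure) X. moment_hyp M X \<alpha> \<longrightarrow>
            (\<forall>\<rho>\<ge>2 * ln (2 * \<alpha>).
               (1 / exp 1) * Ninv M X \<rho> \<le> lpnorm M X \<rho> \<and>
               lpnorm M X \<rho> \<le> 2 * (4 * ln (2 * \<alpha>)) powr (log 2 \<alpha>) * Ninv M X \<rho>))"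
proof -
  have a: "\<alpha> \<ge> 1" by fact
  obtain k :: nat where k1: "2 * ln (2 * \<alpha>) \<le> 2^k" and k2: "\<alpha>^k \<le> (4 * ln (2 * \<alpha>)) powr (log 2 \<alpha>)"
    using kfacts[OF a] by blast
  define B where "B = (4 * ln (2 * \<alpha>)) powr (log 2 \<alpha>)"
  define \<rho>0 where "\<rho>0 = 2 * ln (2 * \<alpha>)"
  have r1: "\<rho>0 > 1" using rho0_gt1[OF a] by (simp add: \<rho>0_def)
  have ak: "\<alpha>^k \<ge> 1" using a by simp
  have Bp: "B > 0" using ak k2 by (simp add: B_def) (use r1 in \<open>simp add: \<rho>0_def\<close>)
  have low: "(1 / exp 1) * Ninv M X \<rho> \<le> lpnorm M X \<rho>"
    if H: "moment_hyp M X \<alpha>" and rho: "\<rho> \<ge> 1" for M :: "'a measure" and X \<rho>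
    using Ninv_facts(2)[OF H rho] by (simp add: field_simps)
  have up: "lpnorm M X \<rho> \<le> 2 * B * Ninv M X \<rho>"
    if H: "moment_hyp M X \<alpha>" and rho: "\<rho> \<ge> \<rho>0" for M :: "'a measure" and X \<rho>
    using upper[OF H a k1 k2] rho by (simp add: B_def \<rho>0_def)
  have P2: "\<forall>(M::'a measure) X. moment_hyp M X \<alpha> \<longrightarrow>
            (\<forall>\<rho>\<ge>2 * ln (2 * \<alpha>).
               (1 / exp 1) * Ninv M X \<rho> \<le> lpnorm M X \<rho> \<and>
               lpnorm M X \<rho> \<le> 2 * (4 * ln (2 * \<alpha>)) powr (log 2 \<alpha>) * Ninv M X \<rho>)"
  proof (intro allI impI conjI)
    fix M :: "'a measure" and X :: "'a \<Rightarrow> real" and \<rho> :: real assume H: "moment_hyp M X \<alpha>" and rho: "\<rho> \<ge> 2 * ln (2 * \<alpha>)"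
    then have "\<rho> \<ge> 1" using r1 by (simp add: \<rho>0_def)
    then show "(1 / exp 1) * Ninv M X \<rho> \<le> lpnorm M X \<rho>" using low[OF H] by blast
    show "lpnorm M X \<rho> \<le> 2 * (4 * ln (2 * \<alpha>)) powr (log 2 \<alpha>) * Ninv M X \<rho>"
      using up[OF H] rho by (simp add: B_def \<rho>0_def)
  qed
  define c where "c = 1 / (exp 1 * \<alpha>^k)"
  have c0: "c > 0" using ak by (simp add: c_def)
  have P1: "\<forall>(M::'a measure) X. moment_hyp M X \<alpha> \<longrightarrow>
            (\<forall>\<rho>\<ge>1. c * Ninv M X (max \<rho> (2 * ln (2 * \<alpha>))) \<le> lpnorm M X \<rho> \<and>
                     lpnorm M X \<rho> \<le> (2 * B) * Ninv M X (max \<rho> (2 * ln (2 * \<alpha>))))"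
  proof (intro allI impI)
    fix M :: "'a measure" and X :: "'a \<Rightarrow> real" and \<rho> :: real assume H: "moment_hyp M X \<alpha>" and rho: "\<rho> \<ge> 1"
    have ints: "\<And>s. s \<ge> 1 \<Longrightarrow> integrable M (\<lambda>x. \<bar>X x\<bar> powr s)" using H by (simp add: moment_hyp_def)
    have P: "prob_space M" and Xm: "X \<in> borel_measurable M" using H by (auto simp: moment_hyp_def)
    show "c * Ninv M X (max \<rho> (2 * ln (2 * \<alpha>))) \<le> lpnorm M X \<rho> \<and>
                     lpnorm M X \<rho> \<le> (2 * B) * Ninv M X (max \<rho> (2 * ln (2 * \<alpha>)))"
    proof (cases "\<rho> \<ge> \<rho>0")
      case True
      then have m: "max \<rho> (2 * ln (2 * \<alpha>)) = \<rho>" by (simp add: \<rho>0_def)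
      have N0: "Ninv M X \<rho> \<ge> 0" using Ninv_facts(1)[OF H rho] .
      have "c * Ninv M X \<rho> \<le> (1 / exp 1) * Ninv M X \<rho>"
        using N0 ak by (intro mult_right_mono) (auto simp: c_def field_simps)
      also have "\<dots> \<le> lpnorm M X \<rho>" using low[OF H rho] .
      finally show ?thesis using up[OF H True] m by simp
    next
      case False
      then have m: "max \<rho> (2 * ln (2 * \<alpha>)) = \<rho>0" by (simp add: \<rho>0_def)
      have r01: "\<rho>0 \<ge> 1" using r1 by simp
      have "c * Ninv M X \<rho>0 \<le> c * (exp 1 * lpnorm M X \<rho>0)"
        using Ninv_facts(2)[OF H r01] c0 by (intro mult_left_mono) auto
      also have "\<dots> = lpnorm M X \<rho>0 / \<alpha>^k" by (simp add: c_def)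
      also have "\<dots> \<le> lpnorm M X \<rho> "
      proof -
        have "\<rho>0 \<le> 2^k * \<rho>" using k1 rho mult_mono[of \<rho>0 "2^k" 1 \<rho>] by (simp add: \<rho>0_def)
        moreover have "1 \<le> 2^k * \<rho>" using calculation r01 by linarith
        ultimately have "lpnorm M X \<rho>0 \<le> lpnorm M X (2^k * \<rho>)"
          using r01 by (intro lp_mono[OF P Xm] ints) auto
        also have "\<dots> \<le> \<alpha>^k * lpnorm M X \<rho>" using lp_double[OF H rho] a by simp
        finally show ?thesis using ak by (simp add: field_simps)
      qed
      finally have L: "c * Ninv M X \<rho>0 \<le> lpnorm M X \<rho>" .
      have "lpnorm M X \<rho> \<le> lpnorm M X \<rho>0"
        using False rho by (intro lp_mono[OF P Xm] ints) auto
      also have "\<dots> \<le> 2 * B * Ninv M X \<rho>0" using up[OF H] by simp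
      finally show ?thesis using L m by simp
    qed
  qed
  show ?thesis
    apply (rule conjI)
    subgoal using P1 c0 Bp by (intro exI[of _ c] conjI exI[of _ "2*B"]) auto
    subgoal using P2 .
    done
qed

end
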